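(* Let $k\ge1$ and let $w_1,w_2\in\mathcal V_k$ be such that $(w_1,w_2)$ is a weak CLT pair. Then $\mathrm{wt}((w_1,w_2))\le k$ if $k$ is odd, and $\mathrm{wt}((w_1,w_2))\le k-1$ if $k$ is even.
   Context: A word is a finite sequence $w=(s_1,\dots,s_m)$ of positive integers; $\ell(w)=m$; closed if $s_1=s_m$; $\mathrm{supp}(w)$ its letter set. $E_w=\{\{s_i,s_{i+1}\}:1\le i\le m-1\}$ (undirected edges); a self edge is $\{u,u\}$. $N_e^w=\#\{i\le m-1:\{s_i,s_{i+1}\}=e\}$. For $a=(w_1,w_2)$: $\mathrm{wt}(a)=\#(\mathrm{supp}(w_1)\cup\mathrm{supp}(w_2))$, $E_a=E_{w_1}\cup E_{w_2}$, $N_e^a=N_e^{w_1}+N_e^{w_2}$. A weak CLT pair is a pair with $N_e^a\ge2$ for all $e\in E_a$ and $E_{w_1}\cap E_{w_2}\ne\emptyset$. $\mathcal V_k$ is the set of closed words of length $k+1$ whose first letter is $1$ and which have at least one self edge. *)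

theory Defs
  imports Main
begin

text \<open>A word is a finite list of positive integers. Positions are 0-based here:
  the word (s_1,...,s_m) is the list [s_1,...,s_m], with s_{i+1} = w ! i.\<close>

definition is_word :: "nat list \<Rightarrow> bool" where
  "is_word w \<longleftrightarrow> (\<forall>s\<in>set w. 0 < s)"

definition closed_word :: "nat list \<Rightarrow> bool" where
  "closed_word w \<longleftrightarrow> w \<noteq> [] \<and> hd w = last w"

definition supp :: "nat list \<Rightarrow> nat set" where
  "supp w = set w"

text \<open>Undirected edges as two-or-one element sets {u,v}.\<close>
definition edges :: "nat list \<Rightarrow> nat set set" where
  "edges w = {{w ! i, w ! (i + 1)} | i. i + 1 < length w}"

definition self_edge :: "nat set \<Rightarrow> bool" where
  "self_edge e \<longleftrightarrow> (\<exists>u. e = {u, u})"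

definition edge_count :: "nat list \<Rightarrow> nat set \<Rightarrow> nat" where
  "edge_count w e = card {i. i + 1 < length w \<and> {w ! i, w ! (i + 1)} = e}"

definition wt_pair :: "nat list \<Rightarrow> nat list \<Rightarrow> nat" where
  "wt_pair w1 w2 = card (supp w1 \<union> supp w2)"

definition edges_pair :: "nat list \<Rightarrow> nat list \<Rightarrow> nat set set" where
  "edges_pair w1 w2 = edges w1 \<union> edges w2"

definition edge_count_pair :: "nat list \<Rightarrow> nat list \<Rightarrow> nat set \<Rightarrow> nat" where
  "edge_count_pair w1 w2 e = edge_count w1 e + edge_count w2 e"

definition weak_CLT_pair :: "nat list \<Rightarrow> nat list \<Rightarrow> bool" where
  "weak_CLT_pair w1 w2 \<longleftrightarrow>
     (\<forall>e\<in>edges_pair w1 w2. 2 \<le> edge_count_pair w1 w2 e) \<and>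
     edges w1 \<inter> edges w2 \<noteq> {}"

definition V :: "nat \<Rightarrow> nat list set" where
  "V k = {w. is_word w \<and> closed_word w \<and> length w = k + 1 \<and> hd w = 1 \<and>
              (\<exists>e\<in>edges w. self_edge e)}"

end

theory Submission
  imports Defs
begin

lemma fin_idx: "finite {i::nat. i+1 < n}"
  by (rule finite_subset[of _ "{..<n}"]) auto

lemma fin_idx': "finite {i::nat. Suc i < n}"
  by (rule finite_subset[of _ "{..<n}"]) auto

lemma finite_edges: "finite (edges w)"
proof -
  have "edges w = (\<lambda>i. {w!i, w!(i+1)}) ` {i. i+1 < length w}" unfolding edges_def by auto
  thus ?thesis by (metis finite_imageI fin_idx)
qed

lemma edge_count_zero: "e \<notin> edges w \<Longrightarrow> edge_count w e = 0"
proof -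
  assume "e \<notin> edges w"
  then have "{i. i + 1 < length w \<and> {w ! i, w ! (i + 1)} = e} = {}" unfolding edges_def by auto
  then show ?thesis unfolding edge_count_def by (metis card.empty)
qed

lemma edge_count_pos: "e \<in> edges w \<Longrightarrow> edge_count w e \<ge> 1"
proof -
  assume "e \<in> edges w"
  then obtain i where "i+1 < length w" "e = {w!i, w!(i+1)}" unfolding edges_def by auto
  moreover have "finite {i. i + 1 < length w \<and> {w ! i, w ! (i + 1)} = e}"
    by (rule finite_subset[of _ "{..<length w}"]) auto
  ultimately show ?thesis unfolding edge_count_def
    by (metis (mono_tags, lifting) One_nat_def Suc_leI card_gt_0_iff empty_iff mem_Collect_eq)
qed

lemma edges_sum: "(\<Sum>e\<in>edges w. edge_count w e) = length w - 1"
proof -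
  let ?I = "{i. i+1 < length w}"
  let ?g = "\<lambda>i. {w!i, w!(i+1)}"
  have I: "?I = {..<length w - 1}" by auto
  have fin: "finite ?I" unfolding I by simp
  have E: "edges w = ?g ` ?I" unfolding edges_def by auto
  have "(\<Sum>e\<in>edges w. \<Sum>i\<in>{x. x \<in> ?I \<and> ?g x = e}. (1::nat)) = (\<Sum>i\<in>?I. 1)"
    unfolding E by (rule sum.group[OF fin]) (auto simp: fin fin_idx fin_idx' intro: finite_imageI)
  moreover have "\<And>e. (\<Sum>i\<in>{x. x \<in> ?I \<and> ?g x = e}. (1::nat)) = edge_count w e"
    unfolding edge_count_def by simp
  ultimately show ?thesis unfolding I by simp
qed

lemma walk_parity:
  fixes c :: "nat \<Rightarrow> bool"
  shows "xs \<noteq> [] \<Longrightarrow> even (card {i. i+1 < length xs \<and> c (xs!i) \<noteq> c (xs!(i+1))}) \<longleftrightarrow> (c (hd xs) = c (last xs))"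
proof (induction xs rule: rev_induct)
  case Nil then show ?case by simp
next
  case (snoc x xs)
  show ?case
  proof (cases "xs = []")
    case True then show ?thesis by simp
  next
    case ne: False
    let ?A = "{i. i+1 < length xs \<and> c (xs!i) \<noteq> c (xs!(i+1))}"
    have fA: "finite ?A" by (rule finite_subset[of _ "{..<length xs}"]) auto
    have nA: "length xs - 1 \<notin> ?A" by auto
    have lx: "xs ! (length xs - 1) = last xs" using ne by (simp add: last_conv_nth)
    have eq: "{i. i+1 < length (xs@[x]) \<and> c ((xs@[x])!i) \<noteq> c ((xs@[x])!(i+1))}
       = ?A \<union> (if c (last xs) \<noteq> c x then {length xs - 1} else {})"
      (is "?L = ?R")
    proof (rule set_eqI)
      fix i
      show "i \<in> ?L \<longleftrightarrow> i \<in> ?R"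
      proof (cases "i + 1 < length xs")
        case True then show ?thesis by (auto simp: nth_append)
      next
        case f2: False
        show ?thesis
        proof (cases "i + 1 = length xs")
          case True
          then have "i = length xs - 1" by simp
          then show ?thesis using True lx f2 by (auto simp: nth_append)
        next
          case False then show ?thesis using f2 ne by auto
        qed
      qed
    qed
    have cd: "card (?A \<union> (if c (last xs) \<noteq> c x then {length xs - 1} else {}))
       = card ?A + (if c (last xs) \<noteq> c x then 1 else 0)"
      using fA nA by auto
    have hh: "hd (xs @ [x]) = hd xs" "last (xs @ [x]) = x" using ne by auto
    show ?thesis
      unfolding eq cd hh using snoc.IH[OF ne] by (cases "c x"; cases "c (last xs)"; cases "c (hd xs)") auto
  qed
qed

lemma coloring:
  "\<exists>c::nat\<Rightarrow>bool. \<forall>i. i+1 < length xs \<and> xs!(i+1) \<notin> set (take (i+1) xs) \<longrightarrow> c (xs!i) \<noteq> c (xs!(i+1))"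
proof (induction xs rule: rev_induct)
  case Nil then show ?case by simp
next
  case (snoc x xs)
  from snoc.IH obtain c :: "nat \<Rightarrow> bool" where c: "\<forall>i. i+1 < length xs \<and> xs!(i+1) \<notin> set (take (i+1) xs) \<longrightarrow> c (xs!i) \<noteq> c (xs!(i+1))" ..
  show ?case
  proof (cases "x \<in> set xs")
    case True
    show ?thesis
    proof (intro exI[of _ c] allI impI)
      fix i assume h: "i + 1 < length (xs @ [x]) \<and> (xs @ [x]) ! (i + 1) \<notin> set (take (i + 1) (xs @ [x]))"
      show "c ((xs @ [x]) ! i) \<noteq> c ((xs @ [x]) ! (i + 1))"
      proof (cases "i + 1 < length xs")
        case True
        have e: "(xs@[x])!i = xs!i" "(xs@[x])!(i+1) = xs!(i+1)" "take (i+1) (xs@[x]) = take (i+1) xs"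
          using True by (simp_all add: nth_append)
        show ?thesis using h spec[OF c, of i] True unfolding e by simp
      next
        case False
        then have ii: "i + 1 = length xs" using h by simp
        have e: "(xs@[x])!(i+1) = x" "take (i+1) (xs@[x]) = xs" using ii by simp_all
        show ?thesis using h True unfolding e by simp
      qed
    qed
  next
    case nx: False
    define c' where "c' = c(x := \<not> c (last xs))"
    show ?thesis
    proof (intro exI[of _ c'] allI impI)
      fix i assume h: "i + 1 < length (xs @ [x]) \<and> (xs @ [x]) ! (i + 1) \<notin> set (take (i + 1) (xs @ [x]))"
      show "c' ((xs @ [x]) ! i) \<noteq> c' ((xs @ [x]) ! (i + 1))"
      proof (cases "i + 1 < length xs")
        case True
        have "xs!i \<in> set xs" "xs!(i+1) \<in> set xs" using True by auto
        then have "xs!i \<noteq> x" "xs!(i+1) \<noteq> x" using nx by auto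
        have e: "(xs@[x])!i = xs!i" "(xs@[x])!(i+1) = xs!(i+1)" "take (i+1) (xs@[x]) = take (i+1) xs"
          using True by (simp_all add: nth_append)
        have cc: "c' (xs!i) = c (xs!i)" "c' (xs!(i+1)) = c (xs!(i+1))" unfolding c'_def using \<open>xs!i \<noteq> x\<close> \<open>xs!(i+1) \<noteq> x\<close> by simp_all
        show ?thesis using h spec[OF c, of i] True unfolding e cc by simp
      next
        case False
        then have i: "i + 1 = length xs" using h by simp
        then have "xs \<noteq> []" by auto
        moreover have i': "i = length xs - 1" using i by simp
        ultimately have "xs ! i = last xs" by (simp add: last_conv_nth)
        moreover have "last xs \<in> set xs" using \<open>xs \<noteq> []\<close> by simp
        ultimately have lx: "(xs@[x])!i = last xs" "last xs \<noteq> x" using i nx by (auto simp: nth_append)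
        have e: "(xs@[x])!(i+1) = x" using i by simp
        show ?thesis unfolding lx e c'_def using lx(2) by simp
      qed
    qed
  qed
qed

lemma edges_app:
  assumes "xs \<noteq> []" "ys \<noteq> []" "last xs = hd ys"
  shows "edges (xs @ tl ys) \<subseteq> edges xs \<union> edges ys"
proof
  fix e assume "e \<in> edges (xs @ tl ys)"
  then obtain i where i: "i + 1 < length (xs @ tl ys)" and e: "e = {(xs @ tl ys)!i, (xs @ tl ys)!(i+1)}"
    unfolding edges_def by auto
  show "e \<in> edges xs \<union> edges ys"
  proof (cases "i + 1 < length xs")
    case True
    then have "e = {xs!i, xs!(i+1)}" using e by (simp add: nth_append)
    then show ?thesis using True unfolding edges_def by auto
  next
    case f: False
    show ?thesis
    proof (cases "i + 1 = length xs")
      case True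
      have "i = length xs - 1" using True by simp
      then have a: "(xs @ tl ys)!i = ys ! 0" using True assms
        by (simp add: nth_append last_conv_nth hd_conv_nth)
      have b: "(xs @ tl ys)!(i+1) = ys ! 1" using True i
        by (simp add: nth_append nth_tl)
      have "0 + 1 < length ys" using i True by auto
      moreover have "e = {ys!0, ys!(0+1)}" using a b e by simp
      ultimately show ?thesis unfolding edges_def by blast
    next
      case False
      define j where "j = i - length xs + 1"
      have a: "(xs @ tl ys)!i = ys ! j" using f False i unfolding j_def
        by (simp add: nth_append nth_tl)
      have b: "(xs @ tl ys)!(i+1) = ys ! (j+1)" using f False i unfolding j_def
        by (simp add: nth_append nth_tl Suc_diff_le)
      have "j + 1 < length ys" using i f False unfolding j_def by auto
      moreover have "e = {ys!j, ys!(j+1)}" using a b e by simp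
      ultimately show ?thesis unfolding edges_def by blast
    qed
  qed
qed


lemma dbl: "{a,b} = {u,u} \<Longrightarrow> a = (b::nat)" by auto

lemma V_facts:
  assumes "w \<in> V k"
  shows "w \<noteq> []" "length w = k + 1" "hd w = 1" "last w = 1" "\<exists>e\<in>edges w. self_edge e"
  using assms unfolding V_def closed_word_def by auto

lemma in_take_nth: "x \<in> set (take n s) \<Longrightarrow> \<exists>j<n. j < length s \<and> s!j = x"
  by (auto simp: in_set_conv_nth)

theorem mainTheorem14:
  fixes k :: nat and w1 w2 :: "nat list"
  assumes "k \<ge> 1"
    and "w1 \<in> V k" and "w2 \<in> V k"
    and "weak_CLT_pair w1 w2"
  shows "(odd k \<longrightarrow> wt_pair w1 w2 \<le> k) \<and> (even k \<longrightarrow> wt_pair w1 w2 \<le> k - 1)"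
proof -
  note f1 = V_facts[OF assms(2)] and f2 = V_facts[OF assms(3)]
  define S where "S = supp w1 \<union> supp w2"
  define E where "E = edges w1 \<union> edges w2"
  define NL where "NL = {e\<in>E. \<not> self_edge e}"
  define Lp where "Lp = {e\<in>E. self_edge e}"
  define s where "s = w1 @ tl w2"
  define x where "x = (\<lambda>e. edge_count w1 e + edge_count w2 e)"
  have finE: "finite E" unfolding E_def using finite_edges by simp
  have finNL: "finite NL" "finite Lp" using finE unfolding NL_def Lp_def by auto
  have cNL: "card NL + card Lp = card E"
  proof -
    have "NL \<union> Lp = E" "NL \<inter> Lp = {}" unfolding NL_def Lp_def by auto
    thus ?thesis using card_Un_disjoint[OF finNL] by simp
  qed
  have ge2: "\<And>e. e \<in> E \<Longrightarrow> 2 \<le> x e"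
    using assms(4) unfolding weak_CLT_pair_def edges_pair_def edge_count_pair_def x_def E_def by auto
  have sum1: "(\<Sum>e\<in>E. edge_count w1 e) = k"
  proof -
    have "(\<Sum>e\<in>E. edge_count w1 e) = (\<Sum>e\<in>edges w1. edge_count w1 e)"
      unfolding E_def by (rule sum.mono_neutral_right) (auto simp: finite_edges edge_count_zero)
    thus ?thesis using edges_sum[of w1] f1 by simp
  qed
  have sum2: "(\<Sum>e\<in>E. edge_count w2 e) = k"
  proof -
    have "(\<Sum>e\<in>E. edge_count w2 e) = (\<Sum>e\<in>edges w2. edge_count w2 e)"
      unfolding E_def by (rule sum.mono_neutral_right) (auto simp: finite_edges edge_count_zero)
    thus ?thesis using edges_sum[of w2] f2 by simp
  qed
  have sumx: "(\<Sum>e\<in>E. x e) = 2 * k" unfolding x_def sum.distrib sum1 sum2 by simp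
  have "card E * 2 \<le> (\<Sum>e\<in>E. x e)" using sum_bounded_below[of E 2 x] ge2 by simp
  hence cardE: "card E \<le> k" using sumx by simp
  have Lpne: "Lp \<noteq> {}" using f1(5) unfolding Lp_def E_def by auto
  hence cLp: "card Lp \<ge> 1" using finNL(2) by (simp add: Suc_le_eq card_gt_0_iff)
  have hs: "hd s = 1" unfolding s_def using f1 by simp
  have s0: "s ! 0 = 1" using hs f1 unfolding s_def by (simp add: hd_conv_nth nth_append)
  have setS: "set s = S" unfolding s_def S_def supp_def
  proof -
    have "set w2 = insert (hd w2) (set (tl w2))" using f2(1) by (cases w2) auto
    moreover have "hd w2 \<in> set w1" using f1 f2 by (metis list.set_sel(1))
    ultimately show "set (w1 @ tl w2) = set w1 \<union> set w2" by auto
  qed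
  have edS: "edges s \<subseteq> E" unfolding s_def E_def using edges_app f1 f2 by simp
  have oneS: "1 \<in> S" using f1(1,3) unfolding S_def supp_def by (metis UnI1 list.set_sel(1))
  from coloring[of s] obtain c :: "nat \<Rightarrow> bool" where c: "\<forall>i. i+1 < length s \<and> s!(i+1) \<notin> set (take (i+1) s) \<longrightarrow> c (s!i) \<noteq> c (s!(i+1))"
    ..
  define p where "p = (\<lambda>v. LEAST j. s!j = v)"
  define f where "f = (\<lambda>v. {s!(p v - 1), v})"
  have pv: "p v < length s \<and> s!(p v) = v \<and> (\<forall>j<p v. s!j \<noteq> v) \<and> p v \<noteq> 0" if vS: "v \<in> S - {1}" for v
  proof -
    obtain j where j: "j < length s" "s!j = v" using vS setS by (auto simp: in_set_conv_nth)
    have a: "s!(p v) = v" unfolding p_def using j(2) by (rule LeastI)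
    have b: "p v \<le> j" unfolding p_def using j(2) by (rule Least_le)
    have cc: "\<forall>i<p v. s!i \<noteq> v" unfolding p_def using not_less_Least by blast
    have nz: "p v \<noteq> 0"
    proof
      assume "p v = 0"
      hence "v = 1" using a s0 by simp
      thus False using vS by simp
    qed
    have "p v < length s" using b j(1) by simp
    thus ?thesis using a cc nz by (intro conjI)
  qed
  have fNL: "f v \<in> NL" and fcol: "c (s!(p v - 1)) \<noteq> c v" if "v \<in> S - {1}" for v
  proof -
    have P: "p v < length s" "s!(p v) = v" "\<forall>j<p v. s!j \<noteq> v" "p v \<noteq> 0" using pv[OF that] by auto
    have i1: "(p v - 1) + 1 = p v" using P(4) by simp
    have i2: "Suc (p v - Suc 0) = p v" using P(4) by simp
    have "f v \<in> edges s" unfolding edges_def f_def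
      by (rule CollectI, rule exI[of _ "p v - 1"]) (simp add: i2 P)
    hence "f v \<in> E" using edS by auto
    moreover have "s!(p v - 1) \<noteq> v" using P by auto
    hence "\<not> self_edge (f v)" unfolding f_def self_edge_def using dbl by blast
    ultimately show "f v \<in> NL" unfolding NL_def by simp
    have nt: "s!(p v - 1 + 1) \<notin> set (take (p v - 1 + 1) s)"
    proof
      assume "s!(p v - 1 + 1) \<in> set (take (p v - 1 + 1) s)"
      then obtain j where "j < p v" "s!j = s!(p v)" using in_take_nth i1 by metis
      thus False using P by auto
    qed
    have "c (s!(p v - 1)) \<noteq> c (s!(p v - 1 + 1))" using spec[OF c, of "p v - 1"] i1 P(1) nt by simp
    hence "c (s!(p v - 1)) \<noteq> c (s!(p v))" using i1 by simp
    thus "c (s!(p v - 1)) \<noteq> c v" using P by simp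
  qed
  have finj: "inj_on f (S - {1})"
  proof (rule inj_onI, rule ccontr)
    fix v v' assume v: "v \<in> S - {1}" and v': "v' \<in> S - {1}" and eq: "f v = f v'" and ne: "v \<noteq> v'"
    have P: "p v < length s" "s!(p v) = v" "\<forall>j<p v. s!j \<noteq> v" "p v \<noteq> 0" using pv[OF v] by auto
    have P': "p v' < length s" "s!(p v') = v'" "\<forall>j<p v'. s!j \<noteq> v'" "p v' \<noteq> 0" using pv[OF v'] by auto
    have "s!(p v - 1) = v'" "s!(p v' - 1) = v" using eq ne unfolding f_def by (auto simp: doubleton_eq_iff)
    hence "\<not> p v' - 1 < p v" "\<not> p v - 1 < p v'" using P(3) P'(3) by auto
    thus False using P(4) P'(4) by linarith
  qed
  have finS: "finite S" unfolding S_def supp_def by simp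
  have cD: "card (f ` (S - {1})) = card S - 1" using card_image[OF finj] oneS finS by simp
  have DNL: "f ` (S - {1}) \<subseteq> NL" using fNL by auto
  have cS: "card S \<le> card NL + 1" using card_mono[OF finNL(1) DNL] cD by simp
  have wt: "wt_pair w1 w2 = card S" unfolding wt_pair_def S_def by simp
  have oddpart: "card S \<le> k" using cS cNL cLp cardE by simp
  have evenpart: "card S \<le> k - 1" if ev: "even k"
  proof (rule ccontr)
    assume "\<not> card S \<le> k - 1"
    hence cSk: "card S = k" using oddpart by simp
    have cNLk: "card NL = k - 1" and cLp1: "card Lp = 1" and cEk: "card E = k"
      using cS cNL cLp cardE cSk by auto
    obtain l where l: "Lp = {l}" using cLp1 card_1_singletonE by blast
    have DeqNL: "f ` (S - {1}) = NL" using card_subset_eq[OF finNL(1) DNL] cD cSk cNLk by simp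
    have colNL: "c a \<noteq> c b" if ab: "{a,b} \<in> NL" for a b
    proof -
      obtain v where v: "v \<in> S - {1}" "{a,b} = f v" using ab DeqNL by auto
      have "c (s!(p v - 1)) \<noteq> c v" using fcol[OF v(1)] .
      moreover have "(a = s!(p v - 1) \<and> b = v) \<or> (a = v \<and> b = s!(p v - 1))"
        using v(2) unfolding f_def by (auto simp: doubleton_eq_iff)
      ultimately show ?thesis by auto
    qed
    obtain e1 where e1: "e1 \<in> edges w1" "self_edge e1" using f1(5) by blast
    obtain e2 where e2: "e2 \<in> edges w2" "self_edge e2" using f2(5) by blast
    have "e1 \<in> Lp" "e2 \<in> Lp" using e1 e2 unfolding Lp_def E_def by auto
    hence le1: "l \<in> edges w1" "l \<in> edges w2" using e1 e2 l by auto
    have lE: "l \<in> E" using l unfolding Lp_def by auto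
    have "(\<Sum>e\<in>E. x e) = x l + (\<Sum>e\<in>E - {l}. x e)" using sum.remove[OF finE lE] .
    moreover have "card (E - {l}) * 2 \<le> (\<Sum>e\<in>E - {l}. x e)"
      using sum_bounded_below[of "E - {l}" 2 x] ge2 by simp
    moreover have "card (E - {l}) = k - 1" using cEk lE finE by simp
    ultimately have "x l \<le> 2" using sumx \<open>k \<ge> 1\<close> by simp
    hence ec1: "edge_count w1 l = 1" using edge_count_pos[OF le1(1)] edge_count_pos[OF le1(2)]
      unfolding x_def by simp
    have "l \<in> Lp" using l by simp
    hence "self_edge l" unfolding Lp_def by simp
    then obtain u where u: "l = {u, u}" unfolding self_edge_def by blast
    define I where "I = {i. i+1 < length w1}"
    define A where "A = {i. i+1 < length w1 \<and> {w1!i, w1!(i+1)} = l}"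
    define B where "B = {i. i+1 < length w1 \<and> c (w1!i) \<noteq> c (w1!(i+1))}"
    have "I = {..<k}" unfolding I_def using f1(2) by auto
    hence cI: "card I = k" by simp
    have cA: "card A = 1" using ec1 unfolding A_def edge_count_def .
    have AI: "A \<subseteq> I" unfolding A_def I_def by auto
    have finI: "finite I" unfolding I_def using fin_idx by simp
    have BIA: "B = I - A"
    proof (rule set_eqI)
      fix i
      show "i \<in> B \<longleftrightarrow> i \<in> I - A"
      proof (cases "i + 1 < length w1")
        case False thus ?thesis unfolding A_def B_def I_def by auto
      next
        case True
        have ee: "{w1!i, w1!(i+1)} \<in> E" using True unfolding E_def edges_def by auto
        show ?thesis
        proof (cases "{w1!i, w1!(i+1)} = l")
          case True
          hence "w1!i = w1!(i+1)" using u by (auto simp: doubleton_eq_iff)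
          thus ?thesis using True unfolding A_def B_def I_def by auto
        next
          case False
          hence "{w1!i, w1!(i+1)} \<notin> Lp" using l by auto
          hence "{w1!i, w1!(i+1)} \<in> NL" using ee unfolding Lp_def NL_def by auto
          hence "c (w1!i) \<noteq> c (w1!(i+1))" by (rule colNL)
          thus ?thesis using False \<open>i+1 < length w1\<close> unfolding A_def B_def I_def by auto
        qed
      qed
    qed
    have finA: "finite A" using finite_subset[OF AI finI] .
    have "card B = k - 1" unfolding BIA using card_Diff_subset[OF finA AI] cI cA by simp
    moreover have "even (card B)" unfolding B_def using walk_parity[OF f1(1), of c] f1(3,4) by simp
    ultimately show False using ev \<open>k \<ge> 1\<close> by presburger
  qed
  show ?thesis using oddpart evenpart wt by simp
qed

end
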